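(* Let $\eta>0$, $u>0$, and $r_\eta(\theta):=\frac{\eta-\sqrt{\eta^2+4\sin^2\theta}}{2\sin\theta}$ for $\theta\in(-\pi,0)$. Then $(-\pi,0)$ can be partitioned into at most 9 intervals on each of which the function \[ \theta\mapsto\arg\big\{1-u^2r_\eta^2(\theta)e^{2i\theta}\big\} \] is monotonic. Moreover, when $u\le1$ there exists $\tilde\theta_{\eta,u}\in(-\frac{\pi}{2},0)$ such that this function is decreasing on $(-\pi,-\tilde\theta_{\eta,u}-\pi)$, increasing on $(-\tilde\theta_{\eta,u}-\pi,\tilde\theta_{\eta,u})$ and decreasing on $(\tilde\theta_{\eta,u},0)$; here $\tilde\theta_{\eta,u}$ is the unique solution $\theta\in(-\frac{\pi}{2},0)$ of \[ -u^2r_\eta^8(\theta)-(1-u^2)r_\eta^6(\theta)+(5+u^2)r_\eta^4(\theta)-(u^2+4\eta^2+7)r_\eta^2(\theta)+3=0. \]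
   Context: $\arg$ denotes the principal argument with values in $(-\pi,\pi]$. *)

theory Defs
  imports "HOL-Analysis.Analysis"
begin

definition r_eta :: "real \<Rightarrow> real \<Rightarrow> real" where
  "r_eta \<eta> \<theta> = (\<eta> - sqrt (\<eta>\<^sup>2 + 4 * (sin \<theta>)\<^sup>2)) / (2 * sin \<theta>)"

definition arg_fun :: "real \<Rightarrow> real \<Rightarrow> real \<Rightarrow> real" where
  "arg_fun \<eta> u \<theta> = Arg (1 - complex_of_real (u\<^sup>2 * (r_eta \<eta> \<theta>)\<^sup>2) * exp (\<i> * complex_of_real (2 * \<theta>)))"

definition tilde_eq :: "real \<Rightarrow> real \<Rightarrow> real \<Rightarrow> real" where
  "tilde_eq \<eta> u \<theta> = (let r = r_eta \<eta> \<theta> in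
     - u\<^sup>2 * r ^ 8 - (1 - u\<^sup>2) * r ^ 6 + (5 + u\<^sup>2) * r ^ 4
     - (u\<^sup>2 + 4 * \<eta>\<^sup>2 + 7) * r\<^sup>2 + 3)"

end

theory Submission imports Defs begin

definition rr :: "real \<Rightarrow> real \<Rightarrow> real" where
  "rr \<eta> s = (- 2 * s) / (\<eta> + sqrt (\<eta>^2 + 4 * s^2))"

lemma sq_pos: "\<eta> > 0 \<Longrightarrow> \<eta> + sqrt (\<eta>^2 + 4 * s^2) > 0"
  by (simp add: add_pos_nonneg)

lemma r_eta_rr: assumes "\<eta> > 0" shows "r_eta \<eta> t = rr \<eta> (sin t)"
proof (cases "sin t = 0")
  case True then show ?thesis by (simp add: r_eta_def rr_def)
next
  case False
  define q where "q = sqrt (\<eta>^2 + 4 * (sin t)^2)"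
  have q2: "q^2 = \<eta>^2+4*(sin t)^2" unfolding q_def by simp
  have qp: "\<eta> + q > 0" unfolding q_def using sq_pos[OF assms] by simp
  have "(\<eta> - q)/(2* sin t) = -2* sin t/(\<eta>+q)"
    using False qp q2 by (simp add: field_simps power2_eq_square)
  then show ?thesis by (simp add: r_eta_def rr_def q_def)
qed

lemma rr_x: assumes "\<eta> > 0"
  shows "(rr \<eta> s)^2 = (sqrt (\<eta>^2 + 4 * s^2) - \<eta>)/(sqrt (\<eta>^2 + 4 * s^2) + \<eta>)"
proof -
  define q where "q = sqrt (\<eta>^2 + 4 * s^2)"
  have q2: "q^2 = \<eta>^2+4* s^2" unfolding q_def by simp
  have qp: "\<eta> + q > 0" unfolding q_def using sq_pos[OF assms] by simp
  have "(rr \<eta> s)^2 = 4* s^2/(\<eta>+q)^2" by (simp add: rr_def q_def power_divide)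
  also have "\<dots> = (q-\<eta>)*(q+\<eta>)/(q+\<eta>)^2" using q2 by (simp add: algebra_simps power2_eq_square)
  also have "\<dots> = (q-\<eta>)/(q+\<eta>)" using qp by (simp add: power2_eq_square add.commute)
  finally show ?thesis by (simp add: q_def)
qed

lemma rr_rel: assumes "\<eta> > 0"
  shows "sqrt (\<eta>^2 + 4 * s^2) * (1 - (rr \<eta> s)^2) = \<eta> * (1 + (rr \<eta> s)^2)"
    and "s * (1 - (rr \<eta> s)^2) = - \<eta> * rr \<eta> s"
    and "(rr \<eta> s)^2 < 1" and "0 \<le> (rr \<eta> s)^2"
    and "s^2 * (1 - (rr \<eta> s)^2)^2 = \<eta>^2 * (rr \<eta> s)^2"
proof -
  define q where "q = sqrt (\<eta>^2 + 4 * s^2)"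
  have q2: "q^2 = \<eta>^2+4* s^2" unfolding q_def by simp
  have qp: "\<eta> + q > 0" unfolding q_def using sq_pos[OF assms] by simp
  have x: "(rr \<eta> s)^2 = (q-\<eta>)/(q+\<eta>)" using rr_x[OF assms] by (simp add: q_def)
  have 1: "1 - (rr \<eta> s)^2 = 2*\<eta>/(q+\<eta>)" using x qp by (simp add: field_simps)
  have "q * (1 - (rr \<eta> s)^2) = \<eta> * (1 + (rr \<eta> s)^2)" 
    using x qp by (simp add: field_simps)
  then show "sqrt (\<eta>^2 + 4 * s^2) * (1 - (rr \<eta> s)^2) = \<eta> * (1 + (rr \<eta> s)^2)" by (simp add: q_def)
  show 2: "s * (1 - (rr \<eta> s)^2) = - \<eta> * rr \<eta> s"
    unfolding 1 by (simp add: rr_def q_def[symmetric] field_simps add.commute)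
  show "(rr \<eta> s)^2 < 1" proof - have "2*\<eta>/(q+\<eta>) > 0" using qp assms by (simp add: add.commute) then show ?thesis using 1 by linarith qed
  show "0 \<le> (rr \<eta> s)^2" by simp
  show "s^2 * (1 - (rr \<eta> s)^2)^2 = \<eta>^2 * (rr \<eta> s)^2"
    using arg_cong[OF 2, of "\<lambda>v. v^2"] by (simp add: power_mult_distrib)
qed


definition Xf :: "real \<Rightarrow> real \<Rightarrow> real" where
  "Xf \<eta> \<sigma> = (sqrt (\<eta>^2 + 4 * \<sigma>) - \<eta>)/(sqrt (\<eta>^2 + 4 * \<sigma>) + \<eta>)"

definition Hf :: "real \<Rightarrow> real \<Rightarrow> real \<Rightarrow> real" where
  "Hf \<eta> u x = u^2 * (x + 1) + 1 - 3 / x + 4 * \<eta>^2 / (1 - x)^2"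

lemma Xf_mono: assumes "\<eta> > 0" "0 \<le> a" "a < b" shows "Xf \<eta> a < Xf \<eta> b"
proof -
  define qa where "qa = sqrt (\<eta>^2 + 4 * a)"
  define qb where "qb = sqrt (\<eta>^2 + 4 * b)"
  have "qa < qb" unfolding qa_def qb_def using assms by simp
  moreover have "qa \<ge> 0" unfolding qa_def by (intro real_sqrt_ge_zero add_nonneg_nonneg) (use assms in auto)
  ultimately have "2*\<eta>/(qb+\<eta>) < 2*\<eta>/(qa+\<eta>)" using assms
    by (intro divide_strict_left_mono) auto
  moreover have "Xf \<eta> a = 1 - 2*\<eta>/(qa+\<eta>)" "Xf \<eta> b = 1 - 2*\<eta>/(qb+\<eta>)"
    unfolding Xf_def qa_def[symmetric] qb_def[symmetric] using \<open>qa \<ge> 0\<close> \<open>qa < qb\<close> assms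
    by (simp_all add: field_simps)
  ultimately show ?thesis by linarith
qed

lemma Hf_mono: assumes "0 < a" "a < b" "b < 1" shows "Hf \<eta> u a < Hf \<eta> u b"
proof -
  have 1: "u^2 * (a + 1) \<le> u^2 * (b + 1)" using assms by (intro mult_left_mono) auto
  have 2: "3 / b < 3 / a" using assms by (intro divide_strict_left_mono) auto
  have "(1 - b)^2 \<le> (1 - a)^2" using assms by (intro power_mono) auto
  then have 3: "4 * \<eta>^2 / (1 - a)^2 \<le> 4 * \<eta>^2 / (1 - b)^2" using assms
    by (intro divide_left_mono) auto
  show ?thesis unfolding Hf_def using 1 2 3 by linarith
qed

lemma rr_Xf: assumes "\<eta> > 0" shows "(rr \<eta> s)^2 = Xf \<eta> (s^2)"
  using rr_x[OF assms] by (simp add: Xf_def)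

lemma rr_pos: assumes "\<eta> > 0" "s \<noteq> 0" shows "(rr \<eta> s)^2 > 0"
  using assms sq_pos[OF assms(1), of s] by (simp add: rr_def)

lemma tilde_H: assumes "\<eta> > 0" "sin t \<noteq> 0"
  shows "tilde_eq \<eta> u t = - ((Xf \<eta> ((sin t)^2)) * (1 - Xf \<eta> ((sin t)^2))^2 * Hf \<eta> u (Xf \<eta> ((sin t)^2)))"
proof -
  define r where "r = rr \<eta> (sin t)"
  define x where "x = Xf \<eta> ((sin t)^2)"
  have rx: "r^2 = x" unfolding r_def x_def using rr_Xf[OF assms(1)] by simp
  have x0: "x > 0" using rr_pos[OF assms] rx r_def by metis
  have x1: "x < 1" using rr_rel(3)[OF assms(1)] rx r_def by metis
  have "r^8 = (r^2)^4" "r^6 = (r^2)^3" "r^4 = (r^2)^2" by (simp_all flip: power_mult)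
  then have r8: "r^8 = x^4" "r^6 = x^3" "r^4 = x^2" using rx by simp_all
  have "tilde_eq \<eta> u t = - (u^2) * x^4 - (1 - u^2) * x^3 + (5 + u^2) * x^2 - (u^2 + 4 * \<eta>^2 + 7) * x + 3"
    unfolding tilde_eq_def Let_def r_eta_rr[OF assms(1)] r_def[symmetric] r8 rx by simp
  also have "\<dots> = - (x * (1 - x)^2 * Hf \<eta> u x)"
    unfolding Hf_def using x0 x1 by (simp add: field_simps) (simp add: algebra_simps power2_eq_square power3_eq_cube power4_eq_xxxx)
  finally show ?thesis by (simp add: x_def)
qed


lemma sin_neg: "-pi < t \<Longrightarrow> t < 0 \<Longrightarrow> sin t < 0"
  using sin_gt_zero[of "-t"] by simp

lemma R_deriv: assumes "\<eta> > 0"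
  shows "((\<lambda>t. rr \<eta> (sin t)) has_real_derivative
     (- 2 * \<eta> * cos t / (sqrt (\<eta>^2 + 4 * (sin t)^2) * (\<eta> + sqrt (\<eta>^2 + 4 * (sin t)^2))))) (at t)"
proof -
  define q where "q = sqrt (\<eta>^2 + 4 * (sin t)^2)"
  have q2: "q^2 = \<eta>^2 + 4 * (sin t)^2" unfolding q_def by (simp add: add_nonneg_nonneg)
  have qp: "\<eta> + q > 0" unfolding q_def using sq_pos[OF assms] by simp
  have ip: "\<eta>^2 + 4 * (sin t)^2 > 0" using assms by (simp add: add_pos_nonneg)
  have q0: "q > 0" unfolding q_def using ip by simp
  have d1: "((\<lambda>t. - 2 * sin t) has_real_derivative (- 2 * cos t)) (at t)"
    by (auto intro!: derivative_eq_intros)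
  have d2: "((\<lambda>t. \<eta>^2 + 4 * (sin t)^2) has_real_derivative (8 * sin t * cos t)) (at t)"
    by (auto intro!: derivative_eq_intros)
  have d3: "((\<lambda>t. sqrt (\<eta>^2 + 4 * (sin t)^2)) has_real_derivative (8 * sin t * cos t * (inverse q / 2))) (at t)"
    using DERIV_chain2[OF DERIV_real_sqrt[OF ip] d2] by (simp add: q_def)
  have d4: "((\<lambda>t. \<eta> + sqrt (\<eta>^2 + 4 * (sin t)^2)) has_real_derivative (8 * sin t * cos t * (inverse q / 2))) (at t)"
    using DERIV_add[OF DERIV_const d3] by simp
  have qne: "\<eta> + sqrt (\<eta>^2 + 4 * (sin t)^2) \<noteq> 0" using qp by (simp add: q_def)
  note d5 = DERIV_quotient[OF d1 d4 qne]
  have e: "(- 2 * cos t * (\<eta> + q) - - 2 * sin t * (8 * sin t * cos t * (inverse q / 2))) / (\<eta> + q)^2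
     = - 2 * \<eta> * cos t / (q * (\<eta> + q))"
  proof -
    have "(- 2 * cos t * (\<eta> + q) - - 2 * sin t * (8 * sin t * cos t * (inverse q / 2)))
         = - 2 * cos t * (q * (\<eta> + q) - 4 * (sin t)^2) / q"
      using q0 by (simp add: field_simps power2_eq_square)
    also have "q * (\<eta> + q) - 4 * (sin t)^2 = \<eta> * (\<eta> + q)"
      using q2 by (simp add: algebra_simps power2_eq_square)
    finally have X: "(- 2 * cos t * (\<eta> + q) - - 2 * sin t * (8 * sin t * cos t * (inverse q / 2)))
         = (- 2 * cos t * (\<eta> * (\<eta> + q))) / q" .
    have n1: "q * (\<eta> + q)^2 \<noteq> 0" "q * (\<eta> + q) \<noteq> 0" using q0 qp by auto
    show ?thesis unfolding X divide_divide_eq_left frac_eq_eq[OF n1]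
      by (simp add: power2_eq_square algebra_simps)
  qed
  show ?thesis unfolding rr_def
    by (rule DERIV_cong[OF d5]) (use e in \<open>simp add: q_def power2_eq_square mult_ac\<close>)
qed


definition Wf :: "real \<Rightarrow> real \<Rightarrow> real \<Rightarrow> real" where
  "Wf \<eta> u t = u^2 * (rr \<eta> (sin t))^2"
definition Wd :: "real \<Rightarrow> real \<Rightarrow> real \<Rightarrow> real" where
  "Wd \<eta> u t = 2 * u^2 * rr \<eta> (sin t) * (- 2 * \<eta> * cos t / (sqrt (\<eta>^2 + 4 * (sin t)^2) * (\<eta> + sqrt (\<eta>^2 + 4 * (sin t)^2))))"
definition zf :: "real \<Rightarrow> real \<Rightarrow> real \<Rightarrow> complex" where
  "zf \<eta> u t = Complex (1 - Wf \<eta> u t * cos (2 * t)) (- (Wf \<eta> u t * sin (2 * t)))"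
definition zd :: "real \<Rightarrow> real \<Rightarrow> real \<Rightarrow> complex" where
  "zd \<eta> u t = Complex (- (Wd \<eta> u t * cos (2 * t)) + 2 * Wf \<eta> u t * sin (2 * t))
                      (- (Wd \<eta> u t * sin (2 * t)) - 2 * Wf \<eta> u t * cos (2 * t))"

lemma W_deriv: assumes "\<eta> > 0" shows "(Wf \<eta> u has_real_derivative Wd \<eta> u t) (at t)"
  unfolding Wf_def[abs_def] Wd_def
  by (rule DERIV_cong[OF DERIV_cmult[OF DERIV_power[OF R_deriv[OF assms]]]]) (simp add: algebra_simps)

lemma arg_zf: assumes "\<eta> > 0" shows "arg_fun \<eta> u t = Arg (zf \<eta> u t)"
  unfolding arg_fun_def zf_def Wf_def
  by (rule arg_cong[where f=Arg]) (simp add: complex_eq_iff Re_exp Im_exp r_eta_rr[OF assms])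

lemma z_deriv: assumes "\<eta> > 0" shows "(zf \<eta> u has_vector_derivative zd \<eta> u t) (at t)"
  unfolding has_vector_derivative_complex_iff zf_def zd_def
  by (auto intro!: derivative_eq_intros W_deriv[OF assms])


lemma W_nonneg: "Wf \<eta> u t \<ge> 0" unfolding Wf_def by simp

lemma W_pos: assumes "\<eta> > 0" "u > 0" "sin t \<noteq> 0" shows "Wf \<eta> u t > 0"
  unfolding Wf_def using rr_pos[OF assms(1,3)] assms(2) by simp

lemma cos2_cases: fixes t :: real assumes "sin (2 * t) = 0" shows "cos (2 * t) = 1 \<or> cos (2 * t) = -1"
proof -
  have "(cos (2 * t))^2 = 1" using sin_cos_squared_add[of "2 * t"] assms by simp
  then show ?thesis by (simp add: power2_eq_1_iff)
qed

lemma zf_nz: assumes "\<eta> > 0" shows "zf \<eta> u t \<noteq> 0"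
proof
  assume "zf \<eta> u t = 0"
  then have 1: "Wf \<eta> u t * cos (2 * t) = 1" and 2: "Wf \<eta> u t * sin (2 * t) = 0"
    by (auto simp: zf_def complex_eq_iff)
  have W0: "Wf \<eta> u t \<noteq> 0" using 1 by auto
  then have "sin (2 * t) = 0" using 2 by simp
  then consider "cos (2 * t) = 1" | "cos (2 * t) = -1" using cos2_cases by blast
  then show False
  proof cases
    case 1
    then have "sin t = 0" using cos_double_sin[of t] by simp
    then show False using W0 by (simp add: Wf_def rr_def)
  next
    case 2
    then show False using 1 W_nonneg[of \<eta> u t] by simp
  qed
qed

lemma zf_notin: assumes "\<eta> > 0" "u > 0" "-pi < t" "t < 0" shows "zf \<eta> u t \<notin> \<real>\<^sub>\<le>\<^sub>0"
proof
  assume "zf \<eta> u t \<in> \<real>\<^sub>\<le>\<^sub>0"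
  then have 1: "Wf \<eta> u t * cos (2 * t) \<ge> 1" and 2: "Wf \<eta> u t * sin (2 * t) = 0"
    by (auto simp: zf_def complex_nonpos_Reals_iff)
  have st: "sin t \<noteq> 0" using sin_neg[OF assms(3,4)] by simp
  have W0: "Wf \<eta> u t > 0" using W_pos[OF assms(1,2) st] .
  then have "sin (2 * t) = 0" using 2 by simp
  then consider "cos (2 * t) = 1" | "cos (2 * t) = -1" using cos2_cases by blast
  then show False
  proof cases
    case 1
    then have "sin t = 0" using cos_double_sin[of t] by simp
    then show False using st by simp
  next
    case 2
    then show False using 1 W0 by simp
  qed
qed

lemma arg_deriv: assumes "\<eta> > 0" "u > 0" "-pi < t" "t < 0"
  shows "(arg_fun \<eta> u has_real_derivative Im (zd \<eta> u t / zf \<eta> u t)) (at t)"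
proof -
  have "((Ln \<circ> zf \<eta> u) has_vector_derivative (zd \<eta> u t * inverse (zf \<eta> u t))) (at t)"
    by (rule field_vector_diff_chain_at[OF z_deriv[OF assms(1)] has_field_derivative_Ln[OF zf_notin[OF assms]]])
  then have "((\<lambda>x. Im ((Ln \<circ> zf \<eta> u) x)) has_real_derivative Im (zd \<eta> u t * inverse (zf \<eta> u t))) (at t)"
    unfolding has_vector_derivative_complex_iff by blast
  moreover have "(\<lambda>x. Im ((Ln \<circ> zf \<eta> u) x)) = arg_fun \<eta> u"
    using Arg_eq_Im_Ln[OF zf_nz[OF assms(1)]] arg_zf[OF assms(1)] by (auto simp: fun_eq_iff)
  ultimately show ?thesis by (simp add: divide_inverse)
qed


lemma tilde_poly: assumes "\<eta> > 0"
  shows "tilde_eq \<eta> u t = - (u^2) * ((rr \<eta> (sin t))^2)^4 - (1 - u^2) * ((rr \<eta> (sin t))^2)^3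
     + (5 + u^2) * ((rr \<eta> (sin t))^2)^2 - (u^2 + 4 * \<eta>^2 + 7) * (rr \<eta> (sin t))^2 + 3"
  unfolding tilde_eq_def Let_def r_eta_rr[OF assms] by (simp flip: power_mult)

lemma deriv_sign_id: assumes "\<eta> > 0" "u > 0" "-pi < t" "t < 0"
  shows "Im (zd \<eta> u t / zf \<eta> u t) * ((Re (zf \<eta> u t))^2 + (Im (zf \<eta> u t))^2)
     * (1 + (rr \<eta> (sin t))^2) * (1 - (rr \<eta> (sin t))^2)^2 = - 2 * Wf \<eta> u t * tilde_eq \<eta> u t"
proof -
  define s where "s = sin t"
  define c where "c = cos t"
  define R where "R = rr \<eta> s"
  define x where "x = R^2"
  define q where "q = sqrt (\<eta>^2 + 4 * s^2)"
  define W where "W = Wf \<eta> u t"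
  define Wd' where "Wd' = Wd \<eta> u t"
  define C where "C = cos (2 * t)"
  define S where "S = sin (2 * t)"
  have Wx: "W = u^2 * x" unfolding W_def Wf_def x_def R_def s_def by simp
  have qp: "\<eta> + q > 0" unfolding q_def using sq_pos[OF assms(1)] by simp
  have q0: "q > 0" unfolding q_def using assms(1) by (simp add: add_pos_nonneg)
  have x1: "x < 1" "0 \<le> x" using rr_rel(3,4)[OF assms(1)] unfolding x_def R_def by auto
  have hq: "q * (1 - x) = \<eta> * (1 + x)" using rr_rel(1)[OF assms(1)] unfolding x_def R_def q_def by simp
  have hs: "s^2 * (1 - x)^2 = \<eta>^2 * x" using rr_rel(5)[OF assms(1)] unfolding x_def R_def by simp
  have Rd: "R * (\<eta> + q) = - 2 * s" unfolding R_def rr_def q_def[symmetric] using qp by simp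
  have CS: "C^2 + S^2 = 1" unfolding C_def S_def by (simp add: add.commute)
  have Cs: "C = 1 - 2 * s^2" unfolding C_def s_def by (simp add: cos_double_sin)
  have Ss: "S = 2 * s * c" unfolding S_def s_def c_def by (simp add: sin_double)
  have c2: "c^2 = 1 - s^2" unfolding c_def s_def by (simp add: cos_squared_eq)
  have Wd_eq: "Wd' = 2 * u^2 * R * (- 2 * \<eta> * c / (q * (\<eta> + q)))"
    unfolding Wd'_def Wd_def R_def q_def c_def s_def by simp
  have WdS1: "Wd' * S = - 8 * u^2 * \<eta> * c^2 * (R * s) / (q * (\<eta> + q))"
    unfolding Wd_eq Ss by (simp add: power2_eq_square field_simps)
  have Rs: "R * s = - x * (\<eta> + q) / 2" unfolding x_def using Rd by (simp add: field_simps power2_eq_square)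
  have WdS2: "Wd' * S = 4 * u^2 * \<eta> * c^2 * x / q"
  proof -
    have "- 8 * u^2 * \<eta> * c^2 * (- x * (\<eta> + q) / 2) = (4 * u^2 * \<eta> * c^2 * x) * (\<eta> + q)"
      by (simp add: field_simps)
    then have "Wd' * S = (4 * u^2 * \<eta> * c^2 * x) * (\<eta> + q) / (q * (\<eta> + q))"
      unfolding WdS1 Rs by simp
    also have "\<dots> = 4 * u^2 * \<eta> * c^2 * x / q"
      using qp by (intro nonzero_mult_divide_mult_cancel_right) simp
    finally show ?thesis .
  qed
  have eq: "\<eta> / q = (1 - x) / (1 + x)" using hq q0 x1 by (simp add: field_simps)
  have WdS: "Wd' * S = 4 * W * c^2 * (1 - x) / (1 + x)"
  proof -
    have "Wd' * S = 4 * u^2 * c^2 * x * (\<eta> / q)" unfolding WdS2 by simp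
    also have "\<dots> = 4 * W * c^2 * (1 - x) / (1 + x)" unfolding eq Wx by simp
    finally show ?thesis .
  qed
  have zre: "Re (zf \<eta> u t) = 1 - W * C" "Im (zf \<eta> u t) = - (W * S)"
    unfolding zf_def W_def C_def S_def by simp_all
  have zdre: "Re (zd \<eta> u t) = - (Wd' * C) + 2 * W * S" "Im (zd \<eta> u t) = - (Wd' * S) - 2 * W * C"
    unfolding zd_def W_def C_def S_def Wd'_def by simp_all
  have den: "(Re (zf \<eta> u t))^2 + (Im (zf \<eta> u t))^2 \<noteq> 0"
    using zf_nz[OF assms(1), of u t] by (simp add: complex_eq_iff)
  have N: "Im (zd \<eta> u t / zf \<eta> u t) * ((Re (zf \<eta> u t))^2 + (Im (zf \<eta> u t))^2)
      = 2 * W^2 * (C^2 + S^2) - 2 * W * C - Wd' * S"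
  proof -
    have num: "Im (zd \<eta> u t) * Re (zf \<eta> u t) - Re (zd \<eta> u t) * Im (zf \<eta> u t)
       = 2 * W^2 * (C^2 + S^2) - 2 * W * C - Wd' * S"
      unfolding zre zdre by (simp add: power2_eq_square algebra_simps)
    show ?thesis unfolding Im_divide num[symmetric] using den by simp
  qed
  have N2: "Im (zd \<eta> u t / zf \<eta> u t) * ((Re (zf \<eta> u t))^2 + (Im (zf \<eta> u t))^2) * (1 + x)
      = 2 * W * ((W - C) * (1 + x) - 2 * c^2 * (1 - x))"
  proof -
    have e1: "4 * W * c^2 * (1 - x) / (1 + x) * (1 + x) = 4 * W * c^2 * (1 - x)" using x1 by simp
    have "(2 * W^2 * 1 - 2 * W * C - 4 * W * c^2 * (1 - x) / (1 + x)) * (1 + x)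
       = 2 * W^2 * (1 + x) - 2 * W * C * (1 + x) - 4 * W * c^2 * (1 - x) / (1 + x) * (1 + x)"
      by (simp add: algebra_simps)
    then show ?thesis unfolding N CS WdS e1 by (simp add: algebra_simps power2_eq_square)
  qed
  have T: "tilde_eq \<eta> u t = - (u^2) * x^4 - (1 - u^2) * x^3 + (5 + u^2) * x^2 - (u^2 + 4 * \<eta>^2 + 7) * x + 3"
    using tilde_poly[OF assms(1), of u t] unfolding x_def R_def s_def .
  have K: "((W - C) * (1 + x) - 2 * c^2 * (1 - x)) * (1 - x)^2 = - tilde_eq \<eta> u t"
  proof -
    have L: "((u^2 * x - (1 - 2 * s^2)) * (1 + x) - 2 * (1 - s^2) * (1 - x)) * (1 - x)^2
        = ((u^2 * x - 1) * (1 + x) - 2 * (1 - x)) * (1 - x)^2 + 4 * (s^2 * (1 - x)^2)"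
      by (simp add: algebra_simps)
    show ?thesis unfolding T Cs c2 Wx L hs
      by (simp add: algebra_simps power2_eq_square power3_eq_cube power4_eq_xxxx)
  qed
  have "Im (zd \<eta> u t / zf \<eta> u t) * ((Re (zf \<eta> u t))^2 + (Im (zf \<eta> u t))^2) * (1 + x) * (1 - x)^2
     = 2 * W * (((W - C) * (1 + x) - 2 * c^2 * (1 - x)) * (1 - x)^2)"
    unfolding N2 by (simp add: mult.assoc)
  also have "\<dots> = - 2 * W * tilde_eq \<eta> u t" unfolding K by simp
  finally show ?thesis
    unfolding s_def[symmetric] R_def[symmetric] x_def[symmetric] W_def[symmetric] .
qed


lemma deriv_sign: assumes "\<eta> > 0" "u > 0" "-pi < t" "t < 0"
  shows "tilde_eq \<eta> u t < 0 \<Longrightarrow> Im (zd \<eta> u t / zf \<eta> u t) > 0"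
    and "tilde_eq \<eta> u t > 0 \<Longrightarrow> Im (zd \<eta> u t / zf \<eta> u t) < 0"
proof -
  define D where "D = Im (zd \<eta> u t / zf \<eta> u t)"
  define P where "P = ((Re (zf \<eta> u t))^2 + (Im (zf \<eta> u t))^2) * (1 + (rr \<eta> (sin t))^2) * (1 - (rr \<eta> (sin t))^2)^2"
  have st: "sin t \<noteq> 0" using sin_neg[OF assms(3,4)] by simp
  have den: "(Re (zf \<eta> u t))^2 + (Im (zf \<eta> u t))^2 > 0"
    using zf_nz[OF assms(1), of u t] by (simp add: complex_eq_iff add_pos_nonneg sum_power2_gt_zero_iff)
  have x1: "(rr \<eta> (sin t))^2 < 1" using rr_rel(3)[OF assms(1)] by blast
  have "(1 - (rr \<eta> (sin t))^2)^2 > 0" using x1 by simp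
  then have P0: "P > 0" unfolding P_def using den
    by (intro mult_pos_pos) (auto simp: add_pos_nonneg)
  have W0: "Wf \<eta> u t > 0" using W_pos[OF assms(1,2) st] .
  have id0: "D * P = - 2 * Wf \<eta> u t * tilde_eq \<eta> u t"
    using deriv_sign_id[OF assms] unfolding D_def P_def by (simp add: mult.assoc)
  have id: "D * P = - 2 * (Wf \<eta> u t * tilde_eq \<eta> u t)"
    unfolding id0 by (simp only: mult.assoc)
  show "tilde_eq \<eta> u t < 0 \<Longrightarrow> Im (zd \<eta> u t / zf \<eta> u t) > 0"
  proof -
    assume h: "tilde_eq \<eta> u t < 0"
    have "D * P > 0" unfolding id using mult_pos_neg[OF W0 h] by linarith
    then show ?thesis using P0 unfolding D_def by (simp add: zero_less_mult_iff)
  qed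
  show "tilde_eq \<eta> u t > 0 \<Longrightarrow> Im (zd \<eta> u t / zf \<eta> u t) < 0"
  proof -
    assume h: "tilde_eq \<eta> u t > 0"
    have "D * P < 0" unfolding id using mult_pos_pos[OF W0 h] by linarith
    then show ?thesis using P0 unfolding D_def by (simp add: mult_less_0_iff)
  qed
qed

lemma smono_deriv:
  fixes f f' :: "real \<Rightarrow> real"
  assumes "\<And>x. a < x \<Longrightarrow> x < b \<Longrightarrow> (f has_real_derivative f' x) (at x)"
    and "\<And>x. a < x \<Longrightarrow> x < b \<Longrightarrow> f' x > 0"
  shows "strict_mono_on {a<..<b} f"
proof (rule monotone_onI)
  fix x y assume "x \<in> {a<..<b}" "y \<in> {a<..<b}" "x < y"
  note xy = this
  show "f x < f y"
  proof (rule DERIV_pos_imp_increasing[OF \<open>x < y\<close>])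
    fix z assume "x \<le> z" "z \<le> y"
    with xy have "a < z" "z < b" by auto
    then show "\<exists>d. DERIV f z :> d \<and> d > 0" using assms by blast
  qed
qed

lemma santimono_deriv:
  fixes f f' :: "real \<Rightarrow> real"
  assumes "\<And>x. a < x \<Longrightarrow> x < b \<Longrightarrow> (f has_real_derivative f' x) (at x)"
    and "\<And>x. a < x \<Longrightarrow> x < b \<Longrightarrow> f' x < 0"
  shows "strict_antimono_on {a<..<b} f"
proof (rule monotone_onI)
  fix x y assume "x \<in> {a<..<b}" "y \<in> {a<..<b}" "x < y"
  note xy = this
  show "f y < f x"
  proof (rule DERIV_neg_imp_decreasing[OF \<open>x < y\<close>])
    fix z assume "x \<le> z" "z \<le> y"
    with xy have "a < z" "z < b" by auto
    then show "\<exists>d. DERIV f z :> d \<and> d < 0" using assms by blast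
  qed
qed


lemma Xf_range: assumes "\<eta> > 0" "\<sigma> > 0" shows "0 < Xf \<eta> \<sigma>" "Xf \<eta> \<sigma> < 1"
proof -
  have "Xf \<eta> 0 = 0" using assms by (simp add: Xf_def)
  then show "0 < Xf \<eta> \<sigma>" using Xf_mono[OF assms(1), of 0 \<sigma>] assms by simp
  have q: "sqrt (\<eta>^2 + 4 * \<sigma>) \<ge> 0" using assms by (intro real_sqrt_ge_zero) simp
  have "sqrt (\<eta>^2 + 4 * \<sigma>) + \<eta> > 0" using q assms by linarith
  then show "Xf \<eta> \<sigma> < 1" using assms unfolding Xf_def by (simp add: divide_less_eq)
qed

lemma K_mono: assumes "\<eta> > 0" "0 < a" "a < b" shows "Hf \<eta> u (Xf \<eta> a) < Hf \<eta> u (Xf \<eta> b)"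
  using Hf_mono[of "Xf \<eta> a" "Xf \<eta> b" \<eta> u] Xf_range[OF assms(1)] Xf_mono[OF assms(1)] assms by force

lemma tilde_form: assumes "\<eta> > 0" "-pi < t" "t < 0"
  shows "\<exists>p > 0. tilde_eq \<eta> u t = - (p * Hf \<eta> u (Xf \<eta> ((sin t)^2)))"
proof -
  have st: "sin t \<noteq> 0" using sin_neg[OF assms(2,3)] by simp
  then have s2: "(sin t)^2 > 0" by simp
  define x where "x = Xf \<eta> ((sin t)^2)"
  have "0 < x" "x < 1" using Xf_range[OF assms(1) s2] by (auto simp: x_def)
  then have "x * (1 - x)^2 > 0" by simp
  then show ?thesis using tilde_H[OF assms(1) st, of u] unfolding x_def[symmetric] by blast
qed

lemma tilde_sign: assumes "\<eta> > 0" "-pi < t" "t < 0" "-pi < t'" "t' < 0" "tilde_eq \<eta> u t' = 0"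
  shows "(sin t')^2 < (sin t)^2 \<Longrightarrow> tilde_eq \<eta> u t < 0"
    and "(sin t)^2 < (sin t')^2 \<Longrightarrow> tilde_eq \<eta> u t > 0"
proof -
  obtain p where p: "p > 0" "tilde_eq \<eta> u t = - (p * Hf \<eta> u (Xf \<eta> ((sin t)^2)))"
    using tilde_form[OF assms(1,2,3)] by blast
  obtain p' where p': "p' > 0" "tilde_eq \<eta> u t' = - (p' * Hf \<eta> u (Xf \<eta> ((sin t')^2)))"
    using tilde_form[OF assms(1,4,5)] by blast
  have K0: "Hf \<eta> u (Xf \<eta> ((sin t')^2)) = 0" using p' assms(6) by simp
  have s1: "(sin t')^2 > 0" "(sin t)^2 > 0" using sin_neg[OF assms(2,3)] sin_neg[OF assms(4,5)] by auto
  show "(sin t')^2 < (sin t)^2 \<Longrightarrow> tilde_eq \<eta> u t < 0"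
  proof -
    assume h: "(sin t')^2 < (sin t)^2"
    have "Hf \<eta> u (Xf \<eta> ((sin t)^2)) > 0" using K_mono[OF assms(1) s1(1) h, of u] K0 by simp
    then show ?thesis using p by simp
  qed
  show "(sin t)^2 < (sin t')^2 \<Longrightarrow> tilde_eq \<eta> u t > 0"
  proof -
    assume h: "(sin t)^2 < (sin t')^2"
    have "Hf \<eta> u (Xf \<eta> ((sin t)^2)) < 0" using K_mono[OF assms(1) s1(2) h, of u] K0 by simp
    then show ?thesis using p by (simp add: mult_pos_neg)
  qed
qed

lemma tilde_cont: assumes "\<eta> > 0" shows "continuous_on S (tilde_eq \<eta> u)"
proof -
  have c: "continuous_on S (\<lambda>t. rr \<eta> (sin t))"
    unfolding rr_def by (intro continuous_intros) (use sq_pos[OF assms] in \<open>auto simp: less_imp_neq[symmetric]\<close>)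
  have "tilde_eq \<eta> u = (\<lambda>t. - (u^2) * ((rr \<eta> (sin t))^2)^4 - (1 - u^2) * ((rr \<eta> (sin t))^2)^3
     + (5 + u^2) * ((rr \<eta> (sin t))^2)^2 - (u^2 + 4 * \<eta>^2 + 7) * (rr \<eta> (sin t))^2 + 3)"
    using tilde_poly[OF assms] by (simp add: fun_eq_iff)
  then show ?thesis using c by (simp add: continuous_intros)
qed

lemma tilde_mid: assumes "\<eta> > 0" "u > 0" shows "tilde_eq \<eta> u (-pi/2) < 0"
proof -
  define x where "x = Xf \<eta> 1"
  have x: "0 < x" "x < 1" using Xf_range[OF assms(1), of 1] by (auto simp: x_def)
  have hs: "(1 - x)^2 = \<eta>^2 * x"
    using rr_rel(5)[OF assms(1), of "-1"] rr_Xf[OF assms(1), of "-1"] by (simp add: x_def)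
  have "4 * \<eta>^2 / (1 - x)^2 = 4 / x" unfolding hs using x assms by simp
  then have "Hf \<eta> u x = u^2 * (x + 1) + 1 + 1 / x" unfolding Hf_def by (simp add: field_simps)
  also have "\<dots> > 0" using x by (simp add: add_pos_pos add_nonneg_pos)
  finally have H: "Hf \<eta> u x > 0" .
  have "x * (1 - x)^2 > 0" using x by simp
  then show ?thesis using tilde_H[OF assms(1), of "-pi/2" u] H unfolding x_def[symmetric]
    by (simp add: x_def)
qed

lemma tilde_zero: "tilde_eq \<eta> u 0 = 3"
  by (simp add: tilde_eq_def r_eta_def)


lemma sq_lt: fixes a b :: real assumes "a < b" "b < 0" shows "b^2 < a^2"
proof -
  have "a^2 - b^2 = (b - a) * (- (a + b))" by (simp add: algebra_simps power2_eq_square)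
  moreover have "(b - a) * (- (a + b)) > 0" using assms by (intro mult_pos_pos) auto
  ultimately show ?thesis by linarith
qed

lemma sin_refl: "sin (-pi - t) = sin t"
  by (simp add: sin_diff)

lemma core: assumes "\<eta> > 0" "u > 0"
  shows "\<exists>\<theta>t. \<theta>t \<in> {-pi/2<..<0} \<and> tilde_eq \<eta> u \<theta>t = 0 \<and>
              (\<forall>\<theta>\<in>{-pi/2<..<0}. tilde_eq \<eta> u \<theta> = 0 \<longrightarrow> \<theta> = \<theta>t) \<and>
              strict_antimono_on {-pi<..<-\<theta>t-pi} (arg_fun \<eta> u) \<and>
              strict_mono_on {-\<theta>t-pi<..<\<theta>t} (arg_fun \<eta> u) \<and>
              strict_antimono_on {\<theta>t<..<0} (arg_fun \<eta> u)"
proof -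
  obtain \<theta>t where th: "-pi/2 \<le> \<theta>t" "\<theta>t \<le> 0" "tilde_eq \<eta> u \<theta>t = 0"
    using IVT'[of "tilde_eq \<eta> u" "-pi/2" 0 0] tilde_mid[OF assms] tilde_zero[of \<eta> u] tilde_cont[OF assms(1)]
    by force
  have th1: "-pi/2 < \<theta>t" using th tilde_mid[OF assms] by (cases "\<theta>t = -pi/2") auto
  have th2: "\<theta>t < 0" using th tilde_zero[of \<eta> u] by (cases "\<theta>t = 0") auto
  have pi2: "pi/2 > 0" by simp
  have th3: "-pi < \<theta>t" using th1 pi2 by linarith
  have A: "(sin t)^2 < (sin \<theta>t)^2" if "\<theta>t < t" "t < 0" for t
  proof -
    have "sin \<theta>t < sin t" using sin_monotone_2pi[of \<theta>t t] th1 that pi2 by linarith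
    moreover have "sin t < 0" using sin_neg[of t] that th3 by linarith
    ultimately show ?thesis by (rule sq_lt)
  qed
  have B: "(sin \<theta>t)^2 < (sin t)^2" if "-pi/2 \<le> t" "t < \<theta>t" for t
  proof -
    have "sin t < sin \<theta>t" using sin_monotone_2pi[of t \<theta>t] th1 th2 that pi2 by linarith
    moreover have "sin \<theta>t < 0" using sin_neg[of \<theta>t] th2 th3 by linarith
    ultimately show ?thesis by (rule sq_lt)
  qed
  have sgn_neg: "tilde_eq \<eta> u t < 0" if "-\<theta>t-pi < t" "t < \<theta>t" for t
  proof -
    have t1: "-pi < t" "t < 0" using that th2 by linarith+
    have "(sin \<theta>t)^2 < (sin t)^2"
    proof (cases "-pi/2 \<le> t")
      case True then show ?thesis using B that by blast
    next
      case False
      then have "-pi/2 \<le> -pi - t" "-pi - t < \<theta>t" using that by linarith+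
      then show ?thesis using B[of "-pi - t"] sin_refl[of t] by simp
    qed
    then show ?thesis using tilde_sign(1)[OF assms(1) t1 th3 th2 th(3)] by blast
  qed
  have sgn_pos1: "tilde_eq \<eta> u t > 0" if "\<theta>t < t" "t < 0" for t
  proof -
    have t1: "-pi < t" "t < 0" using that th3 by linarith+
    show ?thesis using A[OF that] tilde_sign(2)[OF assms(1) t1 th3 th2 th(3)] by blast
  qed
  have sgn_pos2: "tilde_eq \<eta> u t > 0" if "-pi < t" "t < -\<theta>t-pi" for t
  proof -
    have t1: "-pi < t" "t < 0" using that th1 pi2 by linarith+
    have "\<theta>t < -pi - t" "-pi - t < 0" using that by linarith+
    then have "(sin t)^2 < (sin \<theta>t)^2" using A[of "-pi - t"] sin_refl[of t] by simp
    then show ?thesis using tilde_sign(2)[OF assms(1) t1 th3 th2 th(3)] by blast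
  qed
  have uniq: "\<forall>\<theta>\<in>{-pi/2<..<0}. tilde_eq \<eta> u \<theta> = 0 \<longrightarrow> \<theta> = \<theta>t"
  proof (intro ballI impI)
    fix \<theta> assume h: "\<theta> \<in> {-pi/2<..<0}" "tilde_eq \<eta> u \<theta> = 0"
    show "\<theta> = \<theta>t"
    proof (rule ccontr)
      assume "\<theta> \<noteq> \<theta>t"
      then consider "\<theta> < \<theta>t" | "\<theta>t < \<theta>" by linarith
      then show False
      proof cases
        case 1
        have "-\<theta>t-pi < \<theta>" using h(1) th1 by auto
        then show False using sgn_neg[OF _ 1] h(2) by simp
      next
        case 2
        have "\<theta> < 0" using h(1) by auto
        then show False using sgn_pos1[OF 2] h(2) by simp
      qed
    qed
  qed
  define f' where "f' = (\<lambda>t. Im (zd \<eta> u t / zf \<eta> u t))"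
  have der: "(arg_fun \<eta> u has_real_derivative f' t) (at t)" if "-pi < t" "t < 0" for t
    unfolding f'_def using arg_deriv[OF assms that] .
  have m1: "strict_antimono_on {-pi<..<-\<theta>t-pi} (arg_fun \<eta> u)"
  proof (rule santimono_deriv[where f'=f'])
    fix t assume h: "-pi < t" "t < -\<theta>t-pi"
    then have t0: "-pi < t" "t < 0" using th1 pi2 by linarith+
    show "(arg_fun \<eta> u has_real_derivative f' t) (at t)" by (rule der[OF t0])
    show "f' t < 0" unfolding f'_def by (rule deriv_sign(2)[OF assms t0 sgn_pos2[OF h]])
  qed
  have m2: "strict_mono_on {-\<theta>t-pi<..<\<theta>t} (arg_fun \<eta> u)"
  proof (rule smono_deriv[where f'=f'])
    fix t assume h: "-\<theta>t-pi < t" "t < \<theta>t"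
    then have t0: "-pi < t" "t < 0" using th2 by linarith+
    show "(arg_fun \<eta> u has_real_derivative f' t) (at t)" by (rule der[OF t0])
    show "f' t > 0" unfolding f'_def by (rule deriv_sign(1)[OF assms t0 sgn_neg[OF h]])
  qed
  have m3: "strict_antimono_on {\<theta>t<..<0} (arg_fun \<eta> u)"
  proof (rule santimono_deriv[where f'=f'])
    fix t assume h: "\<theta>t < t" "t < 0"
    then have t0: "-pi < t" "t < 0" using th3 by linarith+
    show "(arg_fun \<eta> u has_real_derivative f' t) (at t)" by (rule der[OF t0])
    show "f' t < 0" unfolding f'_def by (rule deriv_sign(2)[OF assms t0 sgn_pos1[OF h]])
  qed
  have thin: "\<theta>t \<in> {-pi/2<..<0}" using th1 th2 by simp
  show ?thesis
    by (rule exI[of _ \<theta>t]) (intro conjI thin th(3) uniq m1 m2 m3)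
qed


theorem lemma5p2:
  fixes \<eta> u :: real
  assumes "\<eta> > 0" and "u > 0"
  shows "(\<exists>P :: real set set. finite P \<and> card P \<le> 9 \<and> pairwise disjnt P \<and>
            \<Union>P = {-pi<..<0} \<and>
            (\<forall>I\<in>P. is_interval I \<and>
                 (mono_on I (arg_fun \<eta> u) \<or> antimono_on I (arg_fun \<eta> u))))
       \<and> (u \<le> 1 \<longrightarrow>
           (\<exists>\<theta>t. \<theta>t \<in> {-pi/2<..<0} \<and> tilde_eq \<eta> u \<theta>t = 0 \<and>
              (\<forall>\<theta>\<in>{-pi/2<..<0}. tilde_eq \<eta> u \<theta> = 0 \<longrightarrow> \<theta> = \<theta>t) \<and>
              strict_antimono_on {-pi<..<-\<theta>t-pi} (arg_fun \<eta> u) \<and>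
              strict_mono_on {-\<theta>t-pi<..<\<theta>t} (arg_fun \<eta> u) \<and>
              strict_antimono_on {\<theta>t<..<0} (arg_fun \<eta> u)))"
proof -
  obtain \<theta>t where T: "\<theta>t \<in> {-pi/2<..<0}" "tilde_eq \<eta> u \<theta>t = 0"
    "\<forall>\<theta>\<in>{-pi/2<..<0}. tilde_eq \<eta> u \<theta> = 0 \<longrightarrow> \<theta> = \<theta>t"
    "strict_antimono_on {-pi<..<-\<theta>t-pi} (arg_fun \<eta> u)"
    "strict_mono_on {-\<theta>t-pi<..<\<theta>t} (arg_fun \<eta> u)"
    "strict_antimono_on {\<theta>t<..<0} (arg_fun \<eta> u)"
    using core[OF assms] by blast
  have pi2: "pi/2 > 0" by simp
  have t1: "-pi/2 < \<theta>t" "\<theta>t < 0" using T(1) by auto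
  define A where "A = {-pi<..<-\<theta>t-pi}"
  define B where "B = {-\<theta>t-pi}"
  define C where "C = {-\<theta>t-pi<..<\<theta>t}"
  define D where "D = {\<theta>t}"
  define E where "E = {\<theta>t<..<0}"
  define P where "P = {A, B, C, D, E}"
  have ord: "-pi < -\<theta>t-pi" "-\<theta>t-pi < \<theta>t" "\<theta>t < 0" using t1 pi2 by linarith+
  have fin: "finite P" unfolding P_def by simp
  have Pset: "set [A, B, C, D, E] = P" unfolding P_def by simp
  have card: "card P \<le> 9" using card_length[of "[A, B, C, D, E]"] unfolding Pset by simp
  have disj: "pairwise disjnt P"
    unfolding P_def A_def B_def C_def D_def E_def pairwise_def disjnt_def
    using ord by (auto simp: set_eq_iff)
  have un: "\<Union>P = {-pi<..<0}"
    unfolding P_def A_def B_def C_def D_def E_def using ord by auto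
  have mono_single: "mono_on {a} g" for a :: real and g :: "real \<Rightarrow> real"
    by (simp add: monotone_on_def)
  have intv: "\<forall>I\<in>P. is_interval I \<and> (mono_on I (arg_fun \<eta> u) \<or> antimono_on I (arg_fun \<eta> u))"
  proof -
    have iA: "is_interval A" "is_interval B" "is_interval C" "is_interval D" "is_interval E"
      unfolding A_def B_def C_def D_def E_def is_interval_1 by auto
    have mA: "antimono_on A (arg_fun \<eta> u)" using T(4) unfolding A_def strict_antimono_iff_antimono by blast
    have mC: "mono_on C (arg_fun \<eta> u)" using T(5) unfolding C_def strict_mono_iff_mono by blast
    have mE: "antimono_on E (arg_fun \<eta> u)" using T(6) unfolding E_def strict_antimono_iff_antimono by blast
    show ?thesis unfolding P_def using iA mA mC mE mono_single unfolding B_def D_def by auto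
  qed
  show ?thesis
    using fin card disj un intv T by blast
qed

end
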